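(* Suppose $n \ge 2k + 1 \ge 5$. Let $Q$ be an independent set of vertices in $K(n,k)$. Suppose $x_1x_2$ is an edge of $K(n,k)$ such that $x_1\in Q$. If $N(\{x_1,x_2\})$ and $Q$ are disjoint, then $|Q| \le \binom{n-1}{k-1}-\binom{n-k-1}{k-1}+1$.
   Context: The Kneser graph $K(n,k)$ has as vertices the $k$-element subsets of $[n]=\{1,\dots,n\}$, two vertices being adjacent iff they are disjoint. For a set $X$ of vertices of a graph, the neighborhood $N(X)$ is the set of vertices not in $X$ that are adjacent to at least one vertex of $X$. *)

theory Defs
  imports Main
begin

definition kneser_vertices :: "nat \<Rightarrow> nat \<Rightarrow> nat set set" where
  "kneser_vertices n k = {A. A \<subseteq> {1..n} \<and> card A = k}"

definition kneser_adj :: "nat \<Rightarrow> nat \<Rightarrow> nat set \<Rightarrow> nat set \<Rightarrow> bool" where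
  "kneser_adj n k A B \<longleftrightarrow> A \<in> kneser_vertices n k \<and> B \<in> kneser_vertices n k \<and> A \<inter> B = {}"

definition kneser_independent :: "nat \<Rightarrow> nat \<Rightarrow> nat set set \<Rightarrow> bool" where
  "kneser_independent n k Q \<longleftrightarrow> Q \<subseteq> kneser_vertices n k \<and>
     (\<forall>A\<in>Q. \<forall>B\<in>Q. \<not> kneser_adj n k A B)"

definition kneser_nbhd :: "nat \<Rightarrow> nat \<Rightarrow> nat set set \<Rightarrow> nat set set" where
  "kneser_nbhd n k X = {B \<in> kneser_vertices n k. B \<notin> X \<and> (\<exists>A\<in>X. kneser_adj n k A B)}"

end

theory Submission
  imports Defs
begin

definition inter :: "'a set set \<Rightarrow> bool" where
  "inter F \<longleftrightarrow> (\<forall>S\<in>F. \<forall>T\<in>F. S \<inter> T \<noteq> {})"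

definition ksub :: "'a set \<Rightarrow> nat \<Rightarrow> 'a set set" where
  "ksub X t = {S. S \<subseteq> X \<and> card S = t}"

definition sh1 :: "'a \<Rightarrow> 'a \<Rightarrow> 'a set set \<Rightarrow> 'a set \<Rightarrow> 'a set" where
  "sh1 x y F S = (if x \<in> S \<and> y \<notin> S \<and> insert y (S - {x}) \<notin> F then insert y (S - {x}) else S)"

definition shift :: "'a \<Rightarrow> 'a \<Rightarrow> 'a set set \<Rightarrow> 'a set set" where
  "shift x y F = sh1 x y F ` F"

lemma finite_ksub: "finite X \<Longrightarrow> finite (ksub X t)"
  unfolding ksub_def by (rule finite_subset[of _ "Pow X"]) auto

lemma card_ksub: "finite X \<Longrightarrow> card (ksub X t) = card X choose t"
  unfolding ksub_def by (simp add: n_subsets)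

lemma sh1_yes: "x \<in> S \<Longrightarrow> y \<notin> S \<Longrightarrow> insert y (S - {x}) \<notin> F \<Longrightarrow> sh1 x y F S = insert y (S - {x})"
  by (simp add: sh1_def)

lemma sh1_no: "\<not> (x \<in> S \<and> y \<notin> S \<and> insert y (S - {x}) \<notin> F) \<Longrightarrow> sh1 x y F S = S"
  unfolding sh1_def by (rule if_not_P)

lemma ins_eq_aux: "x \<in> S \<Longrightarrow> y \<notin> S \<Longrightarrow> x \<in> T \<Longrightarrow> y \<notin> T \<Longrightarrow> insert y (S - {x}) = insert y (T - {x}) \<Longrightarrow> S = T"
proof -
  assume h: "x \<in> S" "y \<notin> S" "x \<in> T" "y \<notin> T" "insert y (S - {x}) = insert y (T - {x})"
  have "insert y (S - {x}) - {y} = insert y (T - {x}) - {y}" using h(5) by simp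
  then have e: "S - {x} = T - {x}" using h(2,4) by auto
  have "S = insert x (S - {x})" using h(1) by auto
  also have "\<dots> = insert x (T - {x})" using e by simp
  also have "\<dots> = T" using h(3) by auto
  finally show ?thesis .
qed

lemma sh1_inj:
  assumes "x \<noteq> y"
  shows "inj_on (sh1 x y F) F"
proof (rule inj_onI)
  fix S T assume S: "S \<in> F" and T: "T \<in> F" and eq: "sh1 x y F S = sh1 x y F T"
  show "S = T"
  proof (cases "x \<in> S \<and> y \<notin> S \<and> insert y (S - {x}) \<notin> F")
    case cS: True
    then have eS: "sh1 x y F S = insert y (S - {x})" unfolding sh1_def by (rule if_P)
    show ?thesis
    proof (cases "x \<in> T \<and> y \<notin> T \<and> insert y (T - {x}) \<notin> F")
      case cT: True
      then have eT: "sh1 x y F T = insert y (T - {x})" unfolding sh1_def by (rule if_P)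
      from eq have "insert y (S - {x}) = insert y (T - {x})" unfolding eS eT .
      then show ?thesis using cS cT ins_eq_aux by metis
    next
      case cT: False
      then have eT: "sh1 x y F T = T" by (rule sh1_no)
      from eq have "insert y (S - {x}) = T" unfolding eS eT .
      with cS T show ?thesis by blast
    qed
  next
    case cS: False
    then have eS: "sh1 x y F S = S" by (rule sh1_no)
    show ?thesis
    proof (cases "x \<in> T \<and> y \<notin> T \<and> insert y (T - {x}) \<notin> F")
      case cT: True
      then have eT: "sh1 x y F T = insert y (T - {x})" unfolding sh1_def by (rule if_P)
      from eq have "S = insert y (T - {x})" unfolding eS eT .
      with cT S show ?thesis by blast
    next
      case cT: False
      then have eT: "sh1 x y F T = T" by (rule sh1_no)
      from eq show ?thesis unfolding eS eT .
    qed
  qed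
qed

lemma shift_card: "x \<noteq> y \<Longrightarrow> card (shift x y F) = card F"
  unfolding shift_def by (intro card_image sh1_inj)

lemma shift_finite: "finite F \<Longrightarrow> finite (shift x y F)"
  unfolding shift_def by simp

lemma one_sided:
  assumes I: "inter F" and S: "S \<in> F" and T: "T \<in> F"
    and cS: "x \<in> S" "y \<notin> S"
    and cT: "\<not> (x \<in> T \<and> y \<notin> T \<and> insert y (T - {x}) \<notin> F)"
  shows "insert y (S - {x}) \<inter> T \<noteq> {}"
proof (cases "y \<in> T")
  case True then show ?thesis by blast
next
  case yT: False
  show ?thesis
  proof (cases "x \<in> T")
    case False
    from I S T obtain z where "z \<in> S" "z \<in> T" unfolding inter_def by blast
    with False show ?thesis by blast
  next
    case True
    with yT cT have "insert y (T - {x}) \<in> F" by blast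
    with I S obtain z where "z \<in> S" "z \<in> insert y (T - {x})" unfolding inter_def by blast
    with cS show ?thesis by blast
  qed
qed

lemma sh1_inter:
  assumes I: "inter F" and S: "S \<in> F" and T: "T \<in> F"
  shows "sh1 x y F S \<inter> sh1 x y F T \<noteq> {}"
proof (cases "x \<in> S \<and> y \<notin> S \<and> insert y (S - {x}) \<notin> F")
  case cS: True
  then have eS: "sh1 x y F S = insert y (S - {x})" unfolding sh1_def by (rule if_P)
  show ?thesis
  proof (cases "x \<in> T \<and> y \<notin> T \<and> insert y (T - {x}) \<notin> F")
    case cT: True
    then have eT: "sh1 x y F T = insert y (T - {x})" unfolding sh1_def by (rule if_P)
    show ?thesis unfolding eS eT by simp
  next
    case cT: False
    then have eT: "sh1 x y F T = T" by (rule sh1_no)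
    have "insert y (S - {x}) \<inter> T \<noteq> {}"
      using one_sided[OF I S T _ _ cT] cS by simp
    then show ?thesis unfolding eS eT .
  qed
next
  case cS: False
  then have eS: "sh1 x y F S = S" by (rule sh1_no)
  show ?thesis
  proof (cases "x \<in> T \<and> y \<notin> T \<and> insert y (T - {x}) \<notin> F")
    case cT: True
    then have eT: "sh1 x y F T = insert y (T - {x})" unfolding sh1_def by (rule if_P)
    have "insert y (T - {x}) \<inter> S \<noteq> {}"
      using one_sided[OF I T S _ _ cS] cT by simp
    then show ?thesis unfolding eS eT by (simp add: Int_commute)
  next
    case cT: False
    then have eT: "sh1 x y F T = T" by (rule sh1_no)
    show ?thesis unfolding eS eT using I S T unfolding inter_def by simp
  qed
qed

lemma shift_inter:
  assumes I: "inter F"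
  shows "inter (shift x y F)"
  unfolding inter_def shift_def
proof (intro ballI)
  fix S' T' assume "S' \<in> sh1 x y F ` F" "T' \<in> sh1 x y F ` F"
  then obtain S T where S: "S \<in> F" and T: "T \<in> F" and e: "S' = sh1 x y F S" "T' = sh1 x y F T"
    by (auto simp only: image_iff)
  show "S' \<inter> T' \<noteq> {}" unfolding e by (rule sh1_inter[OF I S T])
qed

lemma shift_P:
  assumes "\<forall>S\<in>F. P S" "\<And>S. P S \<Longrightarrow> x \<in> S \<Longrightarrow> y \<notin> S \<Longrightarrow> P (insert y (S - {x}))"
  shows "\<forall>S\<in>shift x y F. P S"
proof
  fix S' assume "S' \<in> shift x y F"
  then obtain S where S: "S \<in> F" and e: "S' = sh1 x y F S" unfolding shift_def by auto
  show "P S'"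
  proof (cases "x \<in> S \<and> y \<notin> S \<and> insert y (S - {x}) \<notin> F")
    case True
    then have "S' = insert y (S - {x})" unfolding e sh1_def by (rule if_P)
    then show ?thesis using assms True S by simp
  next
    case False
    then have "S' = S" unfolding e by (rule sh1_no)
    then show ?thesis using assms S by simp
  qed
qed

lemma shift_measure:
  assumes fin: "finite F" and xy: "x \<noteq> y" and S0: "S0 \<in> F" "x \<in> S0" "y \<notin> S0" "insert y (S0 - {x}) \<notin> F"
  shows "card {S\<in>shift x y F. x \<in> S} < card {S\<in>F. x \<in> S}"
proof -
  have "{S\<in>shift x y F. x \<in> S} \<subseteq> {S\<in>F. x \<in> S} - {S0}"
  proof
    fix S' assume "S' \<in> {S\<in>shift x y F. x \<in> S}"
    then obtain T where T: "T \<in> F" "S' = sh1 x y F T" "x \<in> S'" unfolding shift_def by blast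
    have nc: "\<not> (x \<in> T \<and> y \<notin> T \<and> insert y (T - {x}) \<notin> F)"
    proof
      assume "x \<in> T \<and> y \<notin> T \<and> insert y (T - {x}) \<notin> F"
      then have "S' = insert y (T - {x})" using T(2) unfolding sh1_def by simp
      with T(3) xy show False by simp
    qed
    then have "S' = T" using T(2) sh1_no[OF nc] by simp
    moreover have "T \<noteq> S0" using nc S0 by blast
    ultimately show "S' \<in> {S\<in>F. x \<in> S} - {S0}" using T by blast
  qed
  also have "\<dots> \<subset> {S\<in>F. x \<in> S}" using S0 by blast
  finally show ?thesis using fin by (intro psubset_card_mono) auto
qed

lemma stabilize:
  assumes "finite F" "inter F" "\<forall>S\<in>F. P S" "x \<notin> Y"
    "\<And>S y. P S \<Longrightarrow> x \<in> S \<Longrightarrow> y \<in> Y \<Longrightarrow> y \<notin> S \<Longrightarrow> P (insert y (S - {x}))"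
  shows "\<exists>F'. finite F' \<and> card F' = card F \<and> inter F' \<and> (\<forall>S\<in>F'. P S) \<and>
     (\<forall>S\<in>F'. \<forall>y\<in>Y. x \<in> S \<longrightarrow> y \<notin> S \<longrightarrow> insert y (S - {x}) \<in> F')"
  using assms(1-3)
proof (induction "card {S\<in>F. x \<in> S}" arbitrary: F rule: less_induct)
  case less
  show ?case
  proof (cases "\<forall>S\<in>F. \<forall>y\<in>Y. x \<in> S \<longrightarrow> y \<notin> S \<longrightarrow> insert y (S - {x}) \<in> F")
    case True then show ?thesis using less.prems by blast
  next
    case False
    then obtain S0 y where S0: "S0 \<in> F" "y \<in> Y" "x \<in> S0" "y \<notin> S0" "insert y (S0 - {x}) \<notin> F" by blast
    have xy: "x \<noteq> y" using S0 assms(4) by blast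
    have m: "card {S\<in>shift x y F. x \<in> S} < card {S\<in>F. x \<in> S}"
      using shift_measure[OF less.prems(1) xy S0(1) S0(3-5)] .
    have P': "\<forall>S\<in>shift x y F. P S"
      using shift_P[of F P x y] less.prems(3) assms(5) S0(2) by blast
    from less.hyps[OF m shift_finite[OF less.prems(1)] shift_inter[OF less.prems(2)] P']
    show ?thesis using shift_card[OF xy] by metis
  qed
qed


lemma pascal': "0 < a \<Longrightarrow> 0 < b \<Longrightarrow> a choose b = ((a - 1) choose (b - 1)) + ((a - 1) choose b)"
  by (cases a; cases b) auto

lemma central: "1 \<le> t \<Longrightarrow> (2 * t) choose t = 2 * ((2 * t - 1) choose (t - 1))"
proof -
  assume t: "1 \<le> t"
  have "(2 * t) choose t = ((2 * t - 1) choose (t - 1)) + ((2 * t - 1) choose t)"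
    using pascal'[of "2*t" t] t by simp
  moreover have "(2 * t - 1) choose t = (2 * t - 1) choose (2 * t - 1 - t)"
    using t by (intro binomial_symmetric) simp
  moreover have "2 * t - 1 - t = t - 1" by simp
  ultimately show ?thesis by simp
qed

lemma split_stable:
  assumes fin: "finite X" and c: "c \<in> X" and F: "F \<subseteq> ksub X t" and I: "inter F"
    and N: "2 * t \<le> card X"
    and st: "\<forall>S\<in>F. \<forall>y\<in>X - {c}. c \<in> S \<longrightarrow> y \<notin> S \<longrightarrow> insert y (S - {c}) \<in> F"
  shows "card F = card {S\<in>F. c \<notin> S} + card ((\<lambda>S. S - {c}) ` {S\<in>F. c \<in> S})"
    and "inter ((\<lambda>S. S - {c}) ` {S\<in>F. c \<in> S})"
    and "(\<lambda>S. S - {c}) ` {S\<in>F. c \<in> S} \<subseteq> ksub (X - {c}) (t - 1)"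
    and "{S\<in>F. c \<notin> S} \<subseteq> ksub (X - {c}) t"
proof -
  have finF: "finite F" using F finite_ksub[OF fin] finite_subset by blast
  have inj: "inj_on (\<lambda>S. S - {c}) {S\<in>F. c \<in> S}"
  proof (rule inj_onI)
    fix S T assume S: "S \<in> {S\<in>F. c \<in> S}" and T: "T \<in> {S\<in>F. c \<in> S}" and e: "S - {c} = T - {c}"
    have "S = insert c (S - {c})" using S by auto
    also have "\<dots> = insert c (T - {c})" using e by simp
    also have "\<dots> = T" using T by auto
    finally show "S = T" .
  qed
  have "F = {S\<in>F. c \<notin> S} \<union> {S\<in>F. c \<in> S}" by auto
  then have "card F = card {S\<in>F. c \<notin> S} + card {S\<in>F. c \<in> S}"
    using finF by (subst card_Un_disjoint[symmetric]) auto
  then show "card F = card {S\<in>F. c \<notin> S} + card ((\<lambda>S. S - {c}) ` {S\<in>F. c \<in> S})"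
    using card_image[OF inj] by simp
  show "inter ((\<lambda>S. S - {c}) ` {S\<in>F. c \<in> S})"
    unfolding inter_def
  proof (intro ballI notI)
    fix S' T' assume "S' \<in> (\<lambda>S. S - {c}) ` {S\<in>F. c \<in> S}" "T' \<in> (\<lambda>S. S - {c}) ` {S\<in>F. c \<in> S}"
      and d: "S' \<inter> T' = {}"
    then obtain S T where S: "S \<in> F" "c \<in> S" and T: "T \<in> F" "c \<in> T" and e: "S' = S - {c}" "T' = T - {c}"
      by auto
    have cS: "card S = t" "S \<subseteq> X" and cT: "card T = t" "T \<subseteq> X" using S T F unfolding ksub_def by auto
    have fS: "finite S" and fT: "finite T" using cS(2) cT(2) fin finite_subset by auto
    have t1: "1 \<le> t" using cS fS S(2) by (metis One_nat_def Suc_leI card_gt_0_iff empty_iff)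
    have cS1: "card (S - {c}) = t - 1" using S(2) cS(1) fS by (simp add: card_Diff_singleton)
    have cT1: "card (T - {c}) = t - 1" using T(2) cT(1) fT by (simp add: card_Diff_singleton)
    have eU: "S \<union> T = insert c ((S - {c}) \<union> (T - {c}))" using S T by auto
    have fM: "finite ((S - {c}) \<union> (T - {c}))" using fS fT by simp
    have "card (S \<union> T) \<le> Suc (card ((S - {c}) \<union> (T - {c})))"
      unfolding eU using card_insert_if[OF fM, of c] by simp
    also have "card ((S - {c}) \<union> (T - {c})) \<le> card (S - {c}) + card (T - {c})"
      by (rule card_Un_le)
    finally have "card (S \<union> T) \<le> Suc ((t - 1) + (t - 1))" unfolding cS1 cT1 by simp
    then have "card (S \<union> T) < card X" using N t1 by linarith
    then have "\<not> X \<subseteq> S \<union> T" using fS fT card_mono[of "S \<union> T" X] by auto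
    then obtain y where y: "y \<in> X" "y \<notin> S" "y \<notin> T" by blast
    then have yc: "y \<noteq> c" using S by auto
    have "insert y (S - {c}) \<in> F" using st S y yc by blast
    moreover have "insert y (S - {c}) \<inter> T = {}" using d e y by auto
    ultimately show False using I T unfolding inter_def by blast
  qed
  show "(\<lambda>S. S - {c}) ` {S\<in>F. c \<in> S} \<subseteq> ksub (X - {c}) (t - 1)"
    using F unfolding ksub_def by (auto simp: card_Diff_singleton)
  show "{S\<in>F. c \<notin> S} \<subseteq> ksub (X - {c}) t"
    using F unfolding ksub_def by auto
qed


lemma compl_bound:
  assumes fin: "finite X" and N: "card X = 2 * t" and F: "F \<subseteq> ksub X t" and I: "inter F"
    and E: "E \<subseteq> ksub X t" and EF: "\<forall>S\<in>E. S \<notin> F \<and> X - S \<notin> F"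
  shows "2 * card F + card E \<le> (2 * t) choose t"
proof -
  let ?G = "(\<lambda>S. X - S) ` F"
  have finK: "finite (ksub X t)" using finite_ksub[OF fin] .
  have finF: "finite F" using F finK finite_subset by blast
  have finE: "finite E" using E finK finite_subset by blast
  have inj: "inj_on (\<lambda>S. X - S) F"
  proof (rule inj_onI)
    fix S T assume "S \<in> F" "T \<in> F" "X - S = X - T"
    then have "S \<subseteq> X" "T \<subseteq> X" using F unfolding ksub_def by auto
    with \<open>X - S = X - T\<close> show "S = T" by (metis double_diff order_refl)
  qed
  have cG: "card ?G = card F" using card_image[OF inj] .
  have G: "?G \<subseteq> ksub X t"
  proof
    fix S' assume "S' \<in> ?G"
    then obtain S where S: "S \<in> F" "S' = X - S" by blast
    then have "S \<subseteq> X" "card S = t" using F unfolding ksub_def by auto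
    then have "card S' = t" using S N fin by (simp add: card_Diff_subset finite_subset)
    then show "S' \<in> ksub X t" using S unfolding ksub_def by auto
  qed
  have d1: "F \<inter> ?G = {}"
  proof (rule ccontr)
    assume "F \<inter> ?G \<noteq> {}"
    then obtain S T where "S \<in> F" "T \<in> F" "S = X - T" by blast
    then show False using I unfolding inter_def by blast
  qed
  have d2: "E \<inter> (F \<union> ?G) = {}"
  proof (rule ccontr)
    assume "E \<inter> (F \<union> ?G) \<noteq> {}"
    then obtain S where S: "S \<in> E" "S \<in> F \<or> S \<in> ?G" by blast
    show False
    proof (cases "S \<in> F")
      case True then show False using S EF by blast
    next
      case False
      then obtain T where T: "T \<in> F" "S = X - T" using S by blast
      then have "T \<subseteq> X" using F unfolding ksub_def by auto
      then have "X - S = T" using T by auto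
      then show False using EF S T by blast
    qed
  qed
  have "card (E \<union> (F \<union> ?G)) = card E + (card F + card ?G)"
    using d1 d2 finE finF by (simp add: card_Un_disjoint)
  moreover have "E \<union> (F \<union> ?G) \<subseteq> ksub X t" using E F G by auto
  ultimately have "card E + (card F + card ?G) \<le> card (ksub X t)"
    using card_mono[OF finK] by metis
  then show ?thesis using cG card_ksub[OF fin] N by simp
qed

lemma ksub_swap:
  assumes "finite X" "S \<in> ksub X t" "c \<in> S" "y \<in> X" "y \<notin> S"
  shows "insert y (S - {c}) \<in> ksub X t"
proof -
  have S: "S \<subseteq> X" "card S = t" using assms(2) unfolding ksub_def by auto
  have fS: "finite S" using S(1) assms(1) finite_subset by auto
  have "card S > 0" using fS assms(3) card_gt_0_iff by blast
  have "card (insert y (S - {c})) = Suc (card (S - {c}))" using fS assms(5) by simp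
  also have "\<dots> = card S" using assms(3) fS \<open>card S > 0\<close> by (simp add: card_Diff_singleton)
  finally show ?thesis using S assms(4) unfolding ksub_def by auto
qed

lemma inter_mono: "inter F \<Longrightarrow> G \<subseteq> F \<Longrightarrow> inter G"
  unfolding inter_def by blast

lemma inter_card1:
  assumes "finite X" "F \<subseteq> ksub X 1" "inter F"
  shows "card F \<le> 1"
proof -
  have finF: "finite F" using assms finite_ksub finite_subset by blast
  have "\<forall>S\<in>F. \<forall>T\<in>F. S = T"
  proof (intro ballI)
    fix S T assume S: "S \<in> F" and T: "T \<in> F"
    have "S \<in> ksub X 1" "T \<in> ksub X 1" using assms(2) S T by auto
    then obtain u v where "S = {u}" "T = {v}" unfolding ksub_def by (auto simp: card_1_singleton_iff)
    moreover have "S \<inter> T \<noteq> {}" using assms(3) S T unfolding inter_def by blast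
    ultimately show "S = T" by auto
  qed
  then show ?thesis using card_le_Suc0_iff_eq[OF finF] by simp
qed

lemma ekr:
  "finite X \<Longrightarrow> 1 \<le> t \<Longrightarrow> 2 * t \<le> card X \<Longrightarrow> F \<subseteq> ksub X t \<Longrightarrow> inter F
   \<Longrightarrow> card F \<le> (card X - 1) choose (t - 1)"
proof (induction "card X" arbitrary: X t F rule: less_induct)
  case less
  have finF: "finite F" using less.prems finite_ksub finite_subset by blast
  show ?case
  proof (cases "t = 1")
    case True
    then show ?thesis using inter_card1[OF less.prems(1)] less.prems by simp
  next
    case t2: False
    then have t2: "2 \<le> t" using less.prems(2) by simp
    show ?thesis
    proof (cases "card X = 2 * t")
      case True
      have "2 * card F + card ({}::'a set set) \<le> (2 * t) choose t"
        by (rule compl_bound[OF less.prems(1) True less.prems(4,5)]) auto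
      then show ?thesis using central[OF less.prems(2)] True by simp
    next
      case False
      then have N: "2 * t < card X" using less.prems(3) by simp
      have "X \<noteq> {}" using N by (cases "X = {}") auto
      then obtain c where c: "c \<in> X" by blast
      have "\<exists>F'. finite F' \<and> card F' = card F \<and> inter F' \<and> (\<forall>S\<in>F'. S \<in> ksub X t) \<and>
          (\<forall>S\<in>F'. \<forall>y\<in>X - {c}. c \<in> S \<longrightarrow> y \<notin> S \<longrightarrow> insert y (S - {c}) \<in> F')"
      proof (rule stabilize[OF finF less.prems(5)])
        show "\<forall>S\<in>F. S \<in> ksub X t" using less.prems(4) by blast
        show "c \<notin> X - {c}" by simp
        fix S y assume "S \<in> ksub X t" "c \<in> S" "y \<in> X - {c}" "y \<notin> S"
        then show "insert y (S - {c}) \<in> ksub X t" using ksub_swap[OF less.prems(1), of S t c y] by simp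
      qed
      then obtain F' where F': "finite F'" "card F' = card F" "inter F'" "\<forall>S\<in>F'. S \<in> ksub X t"
        "\<forall>S\<in>F'. \<forall>y\<in>X - {c}. c \<in> S \<longrightarrow> y \<notin> S \<longrightarrow> insert y (S - {c}) \<in> F'" by blast
      have F'4: "F' \<subseteq> ksub X t" using F'(4) by blast
      note sp = split_stable[OF less.prems(1) c F'4 F'(3) less.prems(3) F'(5)]
      have cX: "card (X - {c}) = card X - 1" using c by (simp add: card_Diff_singleton)
      have lt: "card (X - {c}) < card X" by (rule card_Diff1_less[OF less.prems(1) c])
      have fX: "finite (X - {c})" using less.prems(1) by simp
      have i0: "inter {S\<in>F'. c \<notin> S}" by (rule inter_mono[OF F'(3)]) blast
      have h0: "card {S\<in>F'. c \<notin> S} \<le> (card (X - {c}) - 1) choose (t - 1)"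
        by (rule less.hyps[OF lt fX less.prems(2) _ sp(4) i0]) (use cX N in simp)
      have h1: "card ((\<lambda>S. S - {c}) ` {S\<in>F'. c \<in> S}) \<le> (card (X - {c}) - 1) choose (t - 1 - 1)"
        by (rule less.hyps[OF lt fX _ _ sp(3) sp(2)]) (use cX N t2 in simp)+
      have "card F = card {S\<in>F'. c \<notin> S} + card ((\<lambda>S. S - {c}) ` {S\<in>F'. c \<in> S})"
        using sp(1) F'(2) by simp
      also have "\<dots> \<le> ((card X - 1 - 1) choose (t - 1)) + ((card X - 1 - 1) choose (t - 1 - 1))"
        using h0 h1 cX by simp
      also have "\<dots> = (card X - 1) choose (t - 1)"
        using pascal'[of "card X - 1" "t - 1"] N t2 by simp
      finally show ?thesis .
    qed
  qed
qed


lemma ksub_finite_mem: "finite X \<Longrightarrow> S \<in> ksub X t \<Longrightarrow> finite S \<and> S \<subseteq> X \<and> card S = t"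
  unfolding ksub_def using finite_subset by auto

lemma gen:
  "finite X \<Longrightarrow> A \<subseteq> X \<Longrightarrow> B \<subseteq> X \<Longrightarrow> A \<inter> B = {} \<Longrightarrow> B \<noteq> {} \<Longrightarrow> card B \<le> card A
   \<Longrightarrow> t \<le> card A \<Longrightarrow> 2 * t \<le> card X \<Longrightarrow> F \<subseteq> ksub X t \<Longrightarrow> inter F
   \<Longrightarrow> \<forall>S\<in>F. S \<inter> A \<noteq> {} \<and> S \<inter> B \<noteq> {}
   \<Longrightarrow> card F + ((card X - 1 - card A) choose (t - 1)) \<le> (card X - 1) choose (t - 1)"
proof (induction "card X" arbitrary: X t A B F rule: less_induct)
  case less
  have finX: "finite X" using less.prems(1) .
  have mpos: "card F1 + ((card X - 1 - card A1) choose (t1 - 1)) \<le> (card X - 1) choose (t1 - 1)"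
    if h: "A1 \<subseteq> X" "B1 \<subseteq> X" "A1 \<inter> B1 = {}" "B1 \<noteq> {}" "card B1 \<le> card A1" "t1 \<le> card A1"
      "2 \<le> t1" "2 * t1 < card X" "F1 \<subseteq> ksub X t1" "inter F1"
      "\<forall>S\<in>F1. S \<inter> A1 \<noteq> {} \<and> S \<inter> B1 \<noteq> {}" "\<not> X \<subseteq> A1 \<union> B1"
    for A1 B1 t1 F1
  proof -
    obtain c where c: "c \<in> X" "c \<notin> A1" "c \<notin> B1" using h(12) by blast
    have finF1: "finite F1" using h(9) finite_ksub[OF finX] finite_subset by blast
    have "\<exists>F'. finite F' \<and> card F' = card F1 \<and> inter F' \<and>
        (\<forall>S\<in>F'. S \<in> ksub X t1 \<and> S \<inter> A1 \<noteq> {} \<and> S \<inter> B1 \<noteq> {}) \<and>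
        (\<forall>S\<in>F'. \<forall>y\<in>X - {c}. c \<in> S \<longrightarrow> y \<notin> S \<longrightarrow> insert y (S - {c}) \<in> F')"
    proof (rule stabilize[OF finF1 h(10)])
      show "\<forall>S\<in>F1. S \<in> ksub X t1 \<and> S \<inter> A1 \<noteq> {} \<and> S \<inter> B1 \<noteq> {}" using h(9,11) by blast
      show "c \<notin> X - {c}" by simp
      fix S y assume a: "S \<in> ksub X t1 \<and> S \<inter> A1 \<noteq> {} \<and> S \<inter> B1 \<noteq> {}" "c \<in> S" "y \<in> X - {c}" "y \<notin> S"
      have "insert y (S - {c}) \<in> ksub X t1" using ksub_swap[OF finX, of S t1 c y] a by simp
      moreover have "insert y (S - {c}) \<inter> A1 \<noteq> {}" using a(1) c(2) by auto
      moreover have "insert y (S - {c}) \<inter> B1 \<noteq> {}" using a(1) c(3) by auto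
      ultimately show "insert y (S - {c}) \<in> ksub X t1 \<and> insert y (S - {c}) \<inter> A1 \<noteq> {} \<and> insert y (S - {c}) \<inter> B1 \<noteq> {}"
        by simp
    qed
    then obtain F' where F': "finite F'" "card F' = card F1" "inter F'"
      "\<forall>S\<in>F'. S \<in> ksub X t1 \<and> S \<inter> A1 \<noteq> {} \<and> S \<inter> B1 \<noteq> {}"
      "\<forall>S\<in>F'. \<forall>y\<in>X - {c}. c \<in> S \<longrightarrow> y \<notin> S \<longrightarrow> insert y (S - {c}) \<in> F'" by blast
    have F'4: "F' \<subseteq> ksub X t1" using F'(4) by blast
    note sp = split_stable[OF finX c(1) F'4 F'(3) _ F'(5)]
    have N1: "2 * t1 \<le> card X" using h(8) by simp
    have cX: "card (X - {c}) = card X - 1" using c by (simp add: card_Diff_singleton)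
    have lt: "card (X - {c}) < card X" by (rule card_Diff1_less[OF finX c(1)])
    have fX: "finite (X - {c})" using finX by simp
    have i0: "inter {S\<in>F'. c \<notin> S}" by (rule inter_mono[OF F'(3)]) blast
    have m0: "\<forall>S\<in>{S\<in>F'. c \<notin> S}. S \<inter> A1 \<noteq> {} \<and> S \<inter> B1 \<noteq> {}" using F'(4) by blast
    have m1: "\<forall>S\<in>(\<lambda>S. S - {c}) ` {S\<in>F'. c \<in> S}. S \<inter> A1 \<noteq> {} \<and> S \<inter> B1 \<noteq> {}"
    proof
      fix S' assume "S' \<in> (\<lambda>S. S - {c}) ` {S\<in>F'. c \<in> S}"
      then obtain S where S: "S \<in> F'" "S' = S - {c}" by blast
      then have "S \<inter> A1 \<noteq> {}" "S \<inter> B1 \<noteq> {}" using F'(4) by auto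
      then show "S' \<inter> A1 \<noteq> {} \<and> S' \<inter> B1 \<noteq> {}" using S(2) c by auto
    qed
    have A1c: "A1 \<subseteq> X - {c}" using h(1) c by auto
    have B1c: "B1 \<subseteq> X - {c}" using h(2) c by auto
    have h0: "card {S\<in>F'. c \<notin> S} + ((card (X - {c}) - 1 - card A1) choose (t1 - 1))
        \<le> (card (X - {c}) - 1) choose (t1 - 1)"
      by (rule less.hyps[OF lt fX A1c B1c h(3,4,5,6) _ sp(4)[OF N1] i0 m0]) (use cX h(8) in simp)
    have h1: "card ((\<lambda>S. S - {c}) ` {S\<in>F'. c \<in> S}) + ((card (X - {c}) - 1 - card A1) choose (t1 - 1 - 1))
        \<le> (card (X - {c}) - 1) choose (t1 - 1 - 1)"
      by (rule less.hyps[OF lt fX A1c B1c h(3,4,5) _ _ sp(3)[OF N1] sp(2)[OF N1] m1]) (use cX h(6,8) in simp)+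
    have "card (A1 \<union> B1) = card A1 + card B1" using h(1,2,3) finX
      by (meson card_Un_disjoint finite_subset)
    moreover have "card (insert c (A1 \<union> B1)) \<le> card X" using h(1,2) c finX by (intro card_mono) auto
    moreover have "card (insert c (A1 \<union> B1)) = Suc (card (A1 \<union> B1))" using c finX h(1,2)
      by (simp add: finite_subset)
    moreover have "card B1 > 0" using h(4) finite_subset[OF h(2) finX] by (simp add: card_gt_0_iff)
    ultimately have big: "card A1 + 2 \<le> card X" by linarith
    have e1: "card X - 1 - card A1 - 1 = card X - 1 - 1 - card A1" by simp
    have p1: "(card X - 1) choose (t1 - 1) = ((card X - 1 - 1) choose (t1 - 1 - 1)) + ((card X - 1 - 1) choose (t1 - 1))"
      using pascal'[of "card X - 1" "t1 - 1"] h(7,8) by simp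
    have p2: "(card X - 1 - card A1) choose (t1 - 1) = ((card X - 1 - 1 - card A1) choose (t1 - 1 - 1)) + ((card X - 1 - 1 - card A1) choose (t1 - 1))"
      using pascal'[of "card X - 1 - card A1" "t1 - 1"] h(7) big e1 by simp
    have "card F1 = card {S\<in>F'. c \<notin> S} + card ((\<lambda>S. S - {c}) ` {S\<in>F'. c \<in> S})"
      using sp(1)[OF N1] F'(2) by simp
    then show ?thesis using h0 h1 p1 p2 cX by simp
  qed
  note P = less.prems
  have finF: "finite F" using P(9) finite_ksub[OF finX] finite_subset by blast
  show ?case
  proof (cases "t \<le> 1")
    case True
    have "F = {}"
    proof (rule ccontr)
      assume "F \<noteq> {}"
      then obtain S where S: "S \<in> F" by blast
      then have "finite S" "card S = t" using P(9) ksub_finite_mem[OF finX] by blast+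
      moreover have "S \<inter> A \<noteq> {}" "S \<inter> B \<noteq> {}" using P(11) S by auto
      then obtain u v where "u \<in> S" "u \<in> A" "v \<in> S" "v \<in> B" by blast
      moreover have "u \<noteq> v" using calculation P(4) by blast
      ultimately have "card {u, v} \<le> card S" by (intro card_mono) auto
      then show False using True \<open>card S = t\<close> \<open>u \<noteq> v\<close> by simp
    qed
    then show ?thesis using True by simp
  next
    case False
    then have t2: "2 \<le> t" by simp
    show ?thesis
    proof (cases "card X = 2 * t")
      case N: True
      show ?thesis
      proof (cases "card A = t")
        case cA: True
        let ?E = "{A, X - A}"
        have Ak: "A \<in> ksub X t" using P(2) cA unfolding ksub_def by simp
        have cXA: "card (X - A) = t" using P(2) cA N finX by (simp add: card_Diff_subset finite_subset)
        have XAk: "X - A \<in> ksub X t" using cXA unfolding ksub_def by simp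
        have AF: "A \<notin> F" using P(11) P(4) by blast
        have XAF: "X - A \<notin> F" using P(11) by blast
        have XXA: "X - (X - A) = A" using P(2) by blast
        have Ane: "A \<noteq> {}" using cA t2 by auto
        have neq: "A \<noteq> X - A" using Ane by blast
        have E1: "?E \<subseteq> ksub X t" using Ak XAk by simp
        have E2: "\<forall>S\<in>?E. S \<notin> F \<and> X - S \<notin> F" using AF XAF XXA by simp
        have "2 * card F + card ?E \<le> (2 * t) choose t"
          by (rule compl_bound[OF finX N P(9) P(10) E1 E2])
        then have "2 * card F + 2 \<le> 2 * ((2 * t - 1) choose (t - 1))"
          using neq central[of t] t2 by simp
        moreover have "card X - 1 - card A = t - 1" using N cA by simp
        ultimately show ?thesis using N by simp
      next
        case cA: False
        then have "card X - 1 - card A < t - 1" using P(7) N t2 by simp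
        then have z: "(card X - 1 - card A) choose (t - 1) = 0" by simp
        have "card F \<le> (card X - 1) choose (t - 1)"
          by (rule ekr[OF finX _ P(8) P(9) P(10)]) (use t2 in simp)
        then show ?thesis unfolding z by simp
      qed
    next
      case False
      then have N: "2 * t < card X" using P(8) by simp
      show ?thesis
      proof (cases "X \<subseteq> A \<union> B")
        case False
        show ?thesis by (rule mpos[OF P(2,3,4,5,6,7) t2 N P(9,10,11) False])
      next
        case XAB: True
        then have XAB: "X = A \<union> B" using P(2,3) by blast
        have finA: "finite A" using P(2) finX finite_subset by blast
        have finB: "finite B" using P(3) finX finite_subset by blast
        have cAB: "card X = card A + card B" using XAB card_Un_disjoint[OF finA finB P(4)] by simp
        show ?thesis
        proof (cases "card B < t")
          case True
          have B0: "0 < card B" using P(5) finB by (simp add: card_gt_0_iff)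
          have "card X - 1 - card A < t - 1" using True cAB B0 by arith
          then have z: "(card X - 1 - card A) choose (t - 1) = 0" by simp
          have "card F \<le> (card X - 1) choose (t - 1)"
            by (rule ekr[OF finX _ P(8) P(9) P(10)]) (use t2 in simp)
          then show ?thesis unfolding z by simp
        next
          case False
          then have Bt: "t \<le> card B" by simp
          have At: "t < card A" using Bt P(6) N cAB by linarith
          have "A \<noteq> {}" using At by auto
          then obtain a where a: "a \<in> A" by blast
          have aB: "a \<notin> B" using a P(4) by blast
          have "\<exists>F'. finite F' \<and> card F' = card F \<and> inter F' \<and>
              (\<forall>S\<in>F'. S \<in> ksub X t \<and> S \<inter> A \<noteq> {} \<and> S \<inter> B \<noteq> {}) \<and>
              (\<forall>S\<in>F'. \<forall>y\<in>A - {a}. a \<in> S \<longrightarrow> y \<notin> S \<longrightarrow> insert y (S - {a}) \<in> F')"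
          proof (rule stabilize[OF finF P(10)])
            show "\<forall>S\<in>F. S \<in> ksub X t \<and> S \<inter> A \<noteq> {} \<and> S \<inter> B \<noteq> {}" using P(9,11) by blast
            show "a \<notin> A - {a}" by simp
            fix S y assume s: "S \<in> ksub X t \<and> S \<inter> A \<noteq> {} \<and> S \<inter> B \<noteq> {}" "a \<in> S" "y \<in> A - {a}" "y \<notin> S"
            have yX: "y \<in> X" using s(3) P(2) by blast
            have "insert y (S - {a}) \<in> ksub X t" using ksub_swap[OF finX, of S t a y] s yX by simp
            moreover have "insert y (S - {a}) \<inter> A \<noteq> {}" using s(3) by auto
            moreover have "insert y (S - {a}) \<inter> B \<noteq> {}" using s(1) aB by auto
            ultimately show "insert y (S - {a}) \<in> ksub X t \<and> insert y (S - {a}) \<inter> A \<noteq> {} \<and> insert y (S - {a}) \<inter> B \<noteq> {}"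
              by simp
          qed
          then obtain F1 where F1: "finite F1" "card F1 = card F" "inter F1"
            "\<forall>S\<in>F1. S \<in> ksub X t \<and> S \<inter> A \<noteq> {} \<and> S \<inter> B \<noteq> {}"
            "\<forall>S\<in>F1. \<forall>y\<in>A - {a}. a \<in> S \<longrightarrow> y \<notin> S \<longrightarrow> insert y (S - {a}) \<in> F1" by blast
          have F1k: "F1 \<subseteq> ksub X t" using F1(4) by blast
          show ?thesis
          proof (cases "\<exists>S0\<in>F1. S0 \<inter> A = {a}")
            case True
            then obtain S0 where S0: "S0 \<in> F1" "S0 \<inter> A = {a}" by blast
            define T0 where "T0 = S0 - {a}"
            have S0k: "finite S0" "S0 \<subseteq> X" "card S0 = t" using S0(1) F1k ksub_finite_mem[OF finX] by blast+
            have aS0: "a \<in> S0" using S0(2) by blast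
            have T0B: "T0 \<subseteq> B" using S0k(2) S0(2) XAB unfolding T0_def by blast
            have cT0: "card T0 = t - 1" unfolding T0_def using aS0 S0k by (simp add: card_Diff_singleton)
            have T0ne: "T0 \<noteq> {}" using cT0 t2 by auto
            have nX: "\<not> X \<subseteq> A \<union> T0"
            proof
              assume "X \<subseteq> A \<union> T0"
              then have "B \<subseteq> T0" using P(3,4) by blast
              then have "card B \<le> card T0" using card_mono[OF finite_subset[OF T0B finB]] by simp
              then show False using cT0 Bt t2 by simp
            qed
            have ins: "insert a' T0 \<in> F1" if "a' \<in> A" for a'
            proof (cases "a' = a")
              case True
              have "insert a T0 = S0" unfolding T0_def using aS0 by blast
              then show ?thesis using True S0(1) by simp
            next
              case False
              then have "a' \<notin> S0" using S0(2) that by blast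
              moreover have "a' \<in> A - {a}" using that False by simp
              ultimately show ?thesis using F1(5)[rule_format, OF S0(1) _ aS0] unfolding T0_def by simp
            qed
            have meet: "\<forall>G\<in>F1. G \<inter> A \<noteq> {} \<and> G \<inter> T0 \<noteq> {}"
            proof
              fix G assume G: "G \<in> F1"
              have GA: "G \<inter> A \<noteq> {}" using F1(4) G by blast
              have "G \<inter> T0 \<noteq> {}"
              proof
                assume d: "G \<inter> T0 = {}"
                have AG: "A \<subseteq> G"
                proof
                  fix a' assume "a' \<in> A"
                  then have "G \<inter> insert a' T0 \<noteq> {}" using F1(3)[unfolded inter_def, rule_format, OF G ins] by simp
                  then show "a' \<in> G" using d by blast
                qed
                obtain b0 where b0: "b0 \<in> G" "b0 \<in> B" using F1(4) G by blast
                have "insert b0 A \<subseteq> G" using AG b0 by blast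
                moreover have "finite G" "card G = t" using G F1k ksub_finite_mem[OF finX] by blast+
                ultimately have "card (insert b0 A) \<le> t" using card_mono[of G "insert b0 A"] by simp
                moreover have "b0 \<notin> A" using b0 P(4) by blast
                ultimately show False using finA At by simp
              qed
              then show "G \<inter> A \<noteq> {} \<and> G \<inter> T0 \<noteq> {}" using GA by simp
            qed
            have T0X: "T0 \<subseteq> X" using T0B P(3) by blast
            have AT0: "A \<inter> T0 = {}" using T0B P(4) by blast
            have cT0A: "card T0 \<le> card A" using cT0 P(7) by simp
            have "card F1 + ((card X - 1 - card A) choose (t - 1)) \<le> (card X - 1) choose (t - 1)"
              by (rule mpos[OF P(2) T0X AT0 T0ne cT0A P(7) t2 N F1k F1(3) meet nX])
            then show ?thesis using F1(2) by simp
          next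
            case False
            have F1A: "\<forall>S\<in>F1. S \<in> ksub X t \<and> S \<inter> (A - {a}) \<noteq> {} \<and> S \<inter> B \<noteq> {}"
            proof
              fix S assume S: "S \<in> F1"
              have "S \<inter> A \<noteq> {}" using F1(4) S by blast
              moreover have "S \<inter> A \<noteq> {a}" using S False by blast
              ultimately
              have "S \<inter> (A - {a}) \<noteq> {}" by blast
              then show "S \<in> ksub X t \<and> S \<inter> (A - {a}) \<noteq> {} \<and> S \<inter> B \<noteq> {}" using F1(4) S by blast
            qed
            have "B \<noteq> {}" using P(5) .
            then obtain b where b: "b \<in> B" by blast
            have bA: "b \<notin> A" using b P(4) by blast
            have "\<exists>F'. finite F' \<and> card F' = card F1 \<and> inter F' \<and>
                (\<forall>S\<in>F'. S \<in> ksub X t \<and> S \<inter> (A - {a}) \<noteq> {} \<and> S \<inter> B \<noteq> {}) \<and>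
                (\<forall>S\<in>F'. \<forall>y\<in>B - {b}. b \<in> S \<longrightarrow> y \<notin> S \<longrightarrow> insert y (S - {b}) \<in> F')"
            proof (rule stabilize[OF F1(1) F1(3) F1A])
              show "b \<notin> B - {b}" by simp
              fix S y assume s: "S \<in> ksub X t \<and> S \<inter> (A - {a}) \<noteq> {} \<and> S \<inter> B \<noteq> {}" "b \<in> S" "y \<in> B - {b}" "y \<notin> S"
              have yX: "y \<in> X" using s(3) P(3) by blast
              have "insert y (S - {b}) \<in> ksub X t" using ksub_swap[OF finX, of S t b y] s yX by simp
              moreover have "insert y (S - {b}) \<inter> B \<noteq> {}" using s(3) by auto
              moreover have "insert y (S - {b}) \<inter> (A - {a}) \<noteq> {}" using s(1) bA by auto
              ultimately show "insert y (S - {b}) \<in> ksub X t \<and> insert y (S - {b}) \<inter> (A - {a}) \<noteq> {} \<and> insert y (S - {b}) \<inter> B \<noteq> {}"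
                by simp
            qed
            then obtain F2 where F2: "finite F2" "card F2 = card F1" "inter F2"
              "\<forall>S\<in>F2. S \<in> ksub X t \<and> S \<inter> (A - {a}) \<noteq> {} \<and> S \<inter> B \<noteq> {}"
              "\<forall>S\<in>F2. \<forall>y\<in>B - {b}. b \<in> S \<longrightarrow> y \<notin> S \<longrightarrow> insert y (S - {b}) \<in> F2" by blast
            have F2k: "F2 \<subseteq> ksub X t" using F2(4) by blast
            show ?thesis
            proof (cases "\<exists>S0\<in>F2. S0 \<inter> B = {b}")
              case True
              then obtain S0 where S0: "S0 \<in> F2" "S0 \<inter> B = {b}" by blast
              define U0 where "U0 = S0 - {b}"
              have S0k: "finite S0" "S0 \<subseteq> X" "card S0 = t" using S0(1) F2k ksub_finite_mem[OF finX] by blast+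
              have bS0: "b \<in> S0" using S0(2) by blast
              have U0A: "U0 \<subseteq> A" using S0k(2) S0(2) XAB unfolding U0_def by blast
              have cU0: "card U0 = t - 1" unfolding U0_def using bS0 S0k by (simp add: card_Diff_singleton)
              have U0ne: "U0 \<noteq> {}" using cU0 t2 by auto
              have nX: "\<not> X \<subseteq> B \<union> U0"
              proof
                assume "X \<subseteq> B \<union> U0"
                then have "A \<subseteq> U0" using P(2,4) by blast
                then have "card A \<le> card U0" using card_mono[OF finite_subset[OF U0A finA]] by simp
                then show False using cU0 At t2 by simp
              qed
              have ins: "insert b' U0 \<in> F2" if "b' \<in> B" for b'
              proof (cases "b' = b")
                case True
                have "insert b U0 = S0" unfolding U0_def using bS0 by blast
                then show ?thesis using True S0(1) by simp
              next
                case False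
                then have "b' \<notin> S0" using S0(2) that by blast
                moreover have "b' \<in> B - {b}" using that False by simp
              ultimately show ?thesis using F2(5)[rule_format, OF S0(1) _ bS0] unfolding U0_def by simp
              qed
              have meet: "\<forall>G\<in>F2. G \<inter> B \<noteq> {} \<and> G \<inter> U0 \<noteq> {}"
              proof
                fix G assume G: "G \<in> F2"
                have GB: "G \<inter> B \<noteq> {}" using F2(4) G by blast
                have "G \<inter> U0 \<noteq> {}"
                proof
                  assume d: "G \<inter> U0 = {}"
                  have BG: "B \<subseteq> G"
                  proof
                    fix b' assume "b' \<in> B"
                    then have "G \<inter> insert b' U0 \<noteq> {}" using F2(3)[unfolded inter_def, rule_format, OF G ins] by simp
                    then show "b' \<in> G" using d by blast
                  qed
                  obtain a0 where a0: "a0 \<in> G" "a0 \<in> A" using F2(4) G by blast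
                  have "insert a0 B \<subseteq> G" using BG a0 by blast
                  moreover have "finite G" "card G = t" using G F2k ksub_finite_mem[OF finX] by blast+
                  ultimately have "card (insert a0 B) \<le> t" using card_mono[of G "insert a0 B"] by simp
                  moreover have "a0 \<notin> B" using a0 P(4) by blast
                  ultimately show False using finB Bt by simp
                qed
                then show "G \<inter> B \<noteq> {} \<and> G \<inter> U0 \<noteq> {}" using GB by simp
              qed
              have U0X: "U0 \<subseteq> X" using U0A P(2) by blast
              have BU0: "B \<inter> U0 = {}" using U0A P(4) by blast
              have cU0B: "card U0 \<le> card B" using cU0 Bt by simp
              have "card F2 + ((card X - 1 - card B) choose (t - 1)) \<le> (card X - 1) choose (t - 1)"
                by (rule mpos[OF P(3) U0X BU0 U0ne cU0B Bt t2 N F2k F2(3) meet nX])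
              moreover have "(card X - 1 - card A) choose (t - 1) \<le> (card X - 1 - card B) choose (t - 1)"
                using P(6) by (intro binomial_right_mono) simp
              ultimately show ?thesis using F2(2) F1(2) by simp
            next
              case False
              have meet: "\<forall>G\<in>F2. G \<inter> (A - {a}) \<noteq> {} \<and> G \<inter> (B - {b}) \<noteq> {}"
              proof
                fix G assume G: "G \<in> F2"
                have "G \<inter> B \<noteq> {}" using F2(4) G by blast
                moreover have "G \<inter> B \<noteq> {b}" using G False by blast
                ultimately
                have "G \<inter> (B - {b}) \<noteq> {}" by blast
                then show "G \<inter> (A - {a}) \<noteq> {} \<and> G \<inter> (B - {b}) \<noteq> {}" using F2(4) G by blast
              qed
              have cA1: "card (A - {a}) = card A - 1" using a by (simp add: card_Diff_singleton)
              have cB1: "card (B - {b}) = card B - 1" using b by (simp add: card_Diff_singleton)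
              have B1ne: "B - {b} \<noteq> {}"
              proof
                assume e0: "B - {b} = {}"
                have "card (B - {b}) = 0" unfolding e0 by simp
                then show False using cB1 Bt t2 by simp
              qed
              have A1X: "A - {a} \<subseteq> X" using P(2) by blast
              have B1X: "B - {b} \<subseteq> X" using P(3) by blast
              have dj: "(A - {a}) \<inter> (B - {b}) = {}" using P(4) by blast
              have c1: "card (B - {b}) \<le> card (A - {a})" using cA1 cB1 P(6) by simp
              have c2: "t \<le> card (A - {a})" using cA1 At by simp
              have nX: "\<not> X \<subseteq> (A - {a}) \<union> (B - {b})" using a aB P(2) by blast
              have "card F2 + ((card X - 1 - card (A - {a})) choose (t - 1)) \<le> (card X - 1) choose (t - 1)"
                by (rule mpos[OF A1X B1X dj B1ne c1 c2 t2 N F2k F2(3) meet nX])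
              moreover have "(card X - 1 - card A) choose (t - 1) \<le> (card X - 1 - card (A - {a})) choose (t - 1)"
                using cA1 by (intro binomial_right_mono) simp
              ultimately show ?thesis using F2(2) F1(2) by simp
            qed
          qed
        qed
      qed
    qed
  qed
qed


theorem lemma2p10:
  fixes n k :: nat and Q :: "nat set set" and x1 x2 :: "nat set"
  assumes "n \<ge> 2 * k + 1" and "2 * k + 1 \<ge> 5"
    and "kneser_independent n k Q"
    and "kneser_adj n k x1 x2"
    and "x1 \<in> Q"
    and "kneser_nbhd n k {x1, x2} \<inter> Q = {}"
  shows "int (card Q) \<le> int ((n - 1) choose (k - 1)) - int ((n - k - 1) choose (k - 1)) + 1"
proof -
  have Qv: "Q \<subseteq> kneser_vertices n k" and Qi: "\<forall>A\<in>Q. \<forall>B\<in>Q. \<not> kneser_adj n k A B"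
    using assms(3) unfolding kneser_independent_def by auto
  have x1v: "x1 \<in> kneser_vertices n k" and x2v: "x2 \<in> kneser_vertices n k" and d12: "x1 \<inter> x2 = {}"
    using assms(4) unfolding kneser_adj_def by auto
  have k2: "2 \<le> k" using assms(2) by simp
  have kv: "kneser_vertices n k = ksub {1..n} k" unfolding kneser_vertices_def ksub_def by simp
  have finX: "finite {1..n}" by simp
  have finQ: "finite Q" using Qv kv finite_ksub[OF finX] finite_subset by metis
  define F where "F = Q - {x1}"
  have x2Q: "x2 \<notin> Q" using Qi assms(4,5) by blast
  have meet: "\<forall>S\<in>F. S \<inter> x1 \<noteq> {} \<and> S \<inter> x2 \<noteq> {}"
  proof
    fix S assume S: "S \<in> F"
    then have SQ: "S \<in> Q" and Sx1: "S \<noteq> x1" unfolding F_def by auto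
    have Sx2: "S \<noteq> x2" using SQ x2Q by auto
    have Sv: "S \<in> kneser_vertices n k" using SQ Qv by auto
    have "S \<notin> kneser_nbhd n k {x1, x2}" using SQ assms(6) by blast
    then have "\<not> kneser_adj n k x1 S" "\<not> kneser_adj n k x2 S"
      unfolding kneser_nbhd_def using Sv Sx1 Sx2 by auto
    then show "S \<inter> x1 \<noteq> {} \<and> S \<inter> x2 \<noteq> {}"
      unfolding kneser_adj_def using Sv x1v x2v by auto
  qed
  have FI: "inter F"
    unfolding inter_def
  proof (intro ballI)
    fix S T assume "S \<in> F" "T \<in> F"
    then have "S \<in> Q" "T \<in> Q" unfolding F_def by auto
    then have "\<not> kneser_adj n k S T" "S \<in> kneser_vertices n k" "T \<in> kneser_vertices n k"
      using Qi Qv by auto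
    then show "S \<inter> T \<noteq> {}" unfolding kneser_adj_def by auto
  qed
  have Fk: "F \<subseteq> ksub {1..n} k" using Qv kv unfolding F_def by auto
  have x1s: "x1 \<subseteq> {1..n}" "card x1 = k" using x1v unfolding kneser_vertices_def by auto
  have x2s: "x2 \<subseteq> {1..n}" "card x2 = k" using x2v unfolding kneser_vertices_def by auto
  have x2ne: "x2 \<noteq> {}" using x2s(2) k2 by auto
  have "card F + ((card {1..n} - 1 - card x1) choose (k - 1)) \<le> (card {1..n} - 1) choose (k - 1)"
    by (rule gen[OF finX x1s(1) x2s(1) d12 x2ne]) (use x1s x2s assms(1) Fk FI meet in simp_all)
  then have h: "card F + ((n - k - 1) choose (k - 1)) \<le> (n - 1) choose (k - 1)"
    using x1s(2) by (simp add: diff_diff_left add.commute)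
  have cQ: "card Q = card F + 1"
    unfolding F_def using finQ assms(5) by (simp add: card_Diff_singleton card_gt_0_iff)
      (metis card_gt_0_iff empty_iff Suc_pred)
  show ?thesis using h cQ by linarith
qed

end
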